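(* A Toeplitz graph is regular if and only if it is a circulant graph. More precisely, for a Toeplitz graph $G=G_n\langle t_1,\ldots,t_k\rangle$: if $G$ is regular then its adjacency matrix (vertices ordered $1,\ldots,n$) is a circulant matrix; and if $G$ is isomorphic to a circulant graph then $G$ is regular.
   Context: For integers $n\ge 2$, $k\ge 1$ and $1\le t_1<t_2<\cdots<t_k\le n-1$, the Toeplitz graph $G_n\langle t_1,\ldots,t_k\rangle$ is the simple graph with vertex set $[n]=\{1,\ldots,n\}$ in which two distinct vertices $i,j$ are adjacent if and only if $|i-j|\in\{t_1,\ldots,t_k\}$. An $n\times n$ matrix $(a_{ij})$ is circulant if $a_{ij}$ depends only on $(i-j)\bmod n$. A circulant graph is a graph isomorphic to a graph whose adjacency matrix is a symmetric $(0,1)$ circulant matrix with zero diagonal. A graph is regular if all vertices have the same degree. *)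

theory Defs
  imports Main
begin

text \<open>Simple graphs are represented by a vertex set V and an adjacency
relation E (assumed symmetric and irreflexive where relevant).\<close>

definition toeplitz_adj :: "nat \<Rightarrow> nat set \<Rightarrow> nat \<Rightarrow> nat \<Rightarrow> bool" where
  "toeplitz_adj n T i j \<longleftrightarrow>
     i \<in> {1..n} \<and> j \<in> {1..n} \<and> i \<noteq> j \<and> nat \<bar>int i - int j\<bar> \<in> T"

definition regular_graph :: "'a set \<Rightarrow> ('a \<Rightarrow> 'a \<Rightarrow> bool) \<Rightarrow> bool" where
  "regular_graph V E \<longleftrightarrow> (\<exists>d. \<forall>v\<in>V. card {u\<in>V. E v u} = d)"

definition circulant_matrix :: "nat \<Rightarrow> (nat \<Rightarrow> nat \<Rightarrow> 'b) \<Rightarrow> bool" where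
  "circulant_matrix n A \<longleftrightarrow>
     (\<forall>i\<in>{1..n}. \<forall>j\<in>{1..n}. \<forall>i'\<in>{1..n}. \<forall>j'\<in>{1..n}.
        (int i - int j) mod int n = (int i' - int j') mod int n \<longrightarrow> A i j = A i' j')"

definition adj_matrix :: "(nat \<Rightarrow> nat \<Rightarrow> bool) \<Rightarrow> nat \<Rightarrow> nat \<Rightarrow> int" where
  "adj_matrix E i j = (if E i j then 1 else 0)"

definition circulant_graph :: "'a set \<Rightarrow> ('a \<Rightarrow> 'a \<Rightarrow> bool) \<Rightarrow> bool" where
  "circulant_graph V E \<longleftrightarrow>
     (\<exists>m f (M :: nat \<Rightarrow> nat \<Rightarrow> int).
        bij_betw f V {1..m} \<and>
        (\<forall>i\<in>{1..m}. \<forall>j\<in>{1..m}. M i j \<in> {0, 1} \<and> M i j = M j i) \<and>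
        (\<forall>i\<in>{1..m}. M i i = 0) \<and>
        circulant_matrix m M \<and>
        (\<forall>u\<in>V. \<forall>v\<in>V. E u v \<longleftrightarrow> M (f u) (f v) = 1))"

end

theory Submission
  imports Defs
begin
lemma deg_formula:
  assumes T: "T \<subseteq> {1..n-1}" and i: "i \<in> {1..n}"
  shows "card {u\<in>{1..n}. toeplitz_adj n T i u} =
         card {t\<in>T. t \<le> n-i} + card {t\<in>T. t \<le> i-1}"
proof -
  have fT: "finite T" using T finite_subset by blast
  have eq: "{u\<in>{1..n}. toeplitz_adj n T i u} =
        (\<lambda>t. i+t) ` {t\<in>T. t \<le> n-i} \<union> (\<lambda>t. i-t) ` {t\<in>T. t \<le> i-1}"
  proof (rule set_eqI, rule iffI)
    fix u assume "u \<in> {u\<in>{1..n}. toeplitz_adj n T i u}"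
    hence u: "u \<in> {1..n}" "u \<noteq> i" "nat \<bar>int i - int u\<bar> \<in> T"
      by (auto simp: toeplitz_adj_def)
    show "u \<in> (\<lambda>t. i+t) ` {t\<in>T. t \<le> n-i} \<union> (\<lambda>t. i-t) ` {t\<in>T. t \<le> i-1}"
    proof (cases "u > i")
      case True
      hence "u - i \<in> T" using u by (simp add: nat_diff_distrib' abs_if)
      moreover have "u = i + (u - i)" using True by simp
      ultimately show ?thesis using u by force
    next
      case False
      hence "i - u \<in> T" "i > u" using u by (auto simp: abs_if nat_diff_distrib')
      moreover have "u = i - (i - u)" using False by simp
      ultimately show ?thesis using u by force
    qed
  next
    fix u assume "u \<in> (\<lambda>t. i+t) ` {t\<in>T. t \<le> n-i} \<union> (\<lambda>t. i-t) ` {t\<in>T. t \<le> i-1}"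
    then show "u \<in> {u\<in>{1..n}. toeplitz_adj n T i u}"
    proof
      assume "u \<in> (\<lambda>t. i+t) ` {t\<in>T. t \<le> n-i}"
      then obtain t where t: "t \<in> T" "t \<le> n - i" "u = i + t" by auto
      have "t \<ge> 1" using t T by auto
      then show ?thesis using t i by (auto simp: toeplitz_adj_def)
    next
      assume "u \<in> (\<lambda>t. i-t) ` {t\<in>T. t \<le> i-1}"
      then obtain t where t: "t \<in> T" "t \<le> i - 1" "u = i - t" by auto
      have "t \<ge> 1" using t T by auto
      then show ?thesis using t i by (auto simp: toeplitz_adj_def)
    qed
  qed
  have d: "(\<lambda>t. i+t) ` {t\<in>T. t \<le> n-i} \<inter> (\<lambda>t. i-t) ` {t\<in>T. t \<le> i-1} = {}"
    using T i by force
  have "card {u\<in>{1..n}. toeplitz_adj n T i u} =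
        card ((\<lambda>t. i+t) ` {t\<in>T. t \<le> n-i}) + card ((\<lambda>t. i-t) ` {t\<in>T. t \<le> i-1})"
    unfolding eq by (rule card_Un_disjoint) (use fT d in auto)
  also have "card ((\<lambda>t. i+t) ` {t\<in>T. t \<le> n-i}) = card {t\<in>T. t \<le> n-i}"
    by (rule card_image) (auto simp: inj_on_def)
  also have "card ((\<lambda>t. i-t) ` {t\<in>T. t \<le> i-1}) = card {t\<in>T. t \<le> i-1}"
    by (rule card_image) (auto simp: inj_on_def)
  finally show ?thesis .
qed

lemma A_Suc:
  assumes "finite T"
  shows "card {t\<in>T. t \<le> Suc s} = card {t\<in>T. t \<le> s} + (if Suc s \<in> T then 1 else 0)"
proof (cases "Suc s \<in> T")
  case True
  have "{t\<in>T. t \<le> Suc s} = insert (Suc s) {t\<in>T. t \<le> s}" using True by auto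
  then show ?thesis using True assms by simp
next
  case False
  have "{t\<in>T. t \<le> Suc s} = {t\<in>T. t \<le> s}" using False le_Suc_eq by auto
  then show ?thesis using False by simp
qed

lemma symm_T:
  assumes T: "T \<subseteq> {1..n-1}" and reg: "regular_graph {1..n} (toeplitz_adj n T)"
    and i: "i \<in> {1..n-1}"
  shows "i \<in> T \<longleftrightarrow> n - i \<in> T"
proof -
  have fT: "finite T" using T finite_subset by blast
  define A where "A s = card {t\<in>T. t \<le> s}" for s
  have AS: "A (Suc s) = A s + (if Suc s \<in> T then 1 else 0)" for s
    unfolding A_def by (rule A_Suc[OF fT])
  obtain d where dd: "\<forall>v\<in>{1..n}. card {u\<in>{1..n}. toeplitz_adj n T v u} = d"
    using reg unfolding regular_graph_def by blast
  have i1: "i \<in> {1..n}" "Suc i \<in> {1..n}" using i by auto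
  have "card {u\<in>{1..n}. toeplitz_adj n T i u} = card {u\<in>{1..n}. toeplitz_adj n T (Suc i) u}"
    using dd i1 by simp
  then have e: "A (n-i) + A (i-1) = A (n - Suc i) + A (Suc i - 1)"
    unfolding deg_formula[OF T i1(1)] deg_formula[OF T i1(2)] A_def .
  obtain a where a: "n - i = Suc a" "n - Suc i = a" using i by (intro that[of "n - Suc i"]) auto
  obtain b where b: "i - 1 = b" "Suc i - 1 = Suc b" "i = Suc b" using i by (intro that[of "i - 1"]) auto
  have "A a + (if Suc a \<in> T then 1 else 0) + A b = A a + (A b + (if Suc b \<in> T then 1 else 0))"
    using e unfolding a(1) a(2) b(1) b(2) AS .
  then have "(if Suc a \<in> T then 1 else 0) = (if Suc b \<in> T then (1::nat) else 0)" by linarith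
  then have "Suc a \<in> T \<longleftrightarrow> Suc b \<in> T" by (simp split: if_splits)
  then show ?thesis unfolding a(1)[symmetric] b(3)[symmetric] by blast
qed

lemma adj_mod:
  assumes T: "T \<subseteq> {1..n-1}" and sym: "\<forall>i\<in>{1..n-1}. i \<in> T \<longleftrightarrow> n - i \<in> T"
    and i: "i \<in> {1..n}" and j: "j \<in> {1..n}"
  shows "toeplitz_adj n T i j \<longleftrightarrow> nat ((int i - int j) mod int n) \<in> T"
proof -
  consider "i = j" | "i > j" | "i < j" by linarith
  then show ?thesis
  proof cases
    case 1 then show ?thesis using T by (auto simp: toeplitz_adj_def)
  next
    case 2
    have "(int i - int j) mod int n = int i - int j"
      by (rule mod_pos_pos_trivial) (use 2 i j in auto)
    moreover have "nat \<bar>int i - int j\<bar> = i - j" using 2 by simp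
    ultimately show ?thesis using 2 i j by (simp add: toeplitz_adj_def)
  next
    case 3
    have "(int i - int j + int n) mod int n = int i - int j + int n"
      by (rule mod_pos_pos_trivial) (use 3 i j in auto)
    hence "(int i - int j) mod int n = int i - int j + int n" by simp
    hence "nat ((int i - int j) mod int n) = n - (j - i)" using 3 i j by auto
    moreover have "j - i \<in> {1..n-1}" using 3 i j by auto
    moreover have "nat \<bar>int i - int j\<bar> = j - i" using 3 by simp
    ultimately show ?thesis using 3 i j sym
      by (simp add: toeplitz_adj_def)
  qed
qed

lemma circ_card:
  fixes M :: "nat \<Rightarrow> nat \<Rightarrow> int"
  assumes c: "circulant_matrix m M" and i: "i \<in> {1..m}"
  shows "card {j\<in>{1..m}. M i j = 1} = card {r\<in>{0..<m}. M (r+1) 1 = 1}"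
proof -
  define \<phi> where "\<phi> j = nat ((int i - int j) mod int m)" for j
  have m: "m \<ge> 1" using i by auto
  have inj: "inj_on \<phi> {1..m}"
  proof (rule inj_onI)
    fix a b assume a: "a \<in> {1..m}" and b: "b \<in> {1..m}" and e: "\<phi> a = \<phi> b"
    have "(int i - int a) mod int m = (int i - int b) mod int m"
      using e m unfolding \<phi>_def by (simp add: nat_eq_iff2)
    hence "(int i - (int i - int a)) mod int m = (int i - (int i - int b)) mod int m"
      by (rule mod_diff_cong[OF refl])
    hence "int a mod int m = int b mod int m" by simp
    hence am: "a mod m = b mod m" by (metis of_nat_eq_iff of_nat_mod)
    show "a = b"
    proof (cases "a = m")
      case True
      then have "b mod m = 0" using am by simp
      show ?thesis
      proof (rule ccontr)
        assume "a \<noteq> b"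
        then have "b < m" using b True by auto
        then have "b mod m = b" by simp
        then show False using \<open>b mod m = 0\<close> b by simp
      qed
    next
      case False
      then have "a < m" using a by auto
      then have am2: "a mod m = a" by simp
      have "b \<noteq> m"
      proof
        assume "b = m"
        then have "a = 0" using am am2 by simp
        then show False using a by simp
      qed
      then have "b < m" using b by auto
      then have "b mod m = b" by simp
      moreover note am2
      ultimately show ?thesis using am by simp
    qed
  qed
  have lt: "\<phi> j < m" for j
  proof -
    have "(int i - int j) mod int m < int m" "0 \<le> (int i - int j) mod int m" using m by auto
    thus ?thesis unfolding \<phi>_def by linarith
  qed
  have sub: "\<phi> ` {1..m} \<subseteq> {0..<m}" using lt by auto
  have img: "\<phi> ` {1..m} = {0..<m}"
    by (rule card_subset_eq) (use sub card_image[OF inj] in auto)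
  have val: "M i j = M (\<phi> j + 1) 1" if j: "j \<in> {1..m}" for j
  proof -
    have p: "\<phi> j + 1 \<in> {1..m}" "(1::nat) \<in> {1..m}" using lt[of j] m by auto
    have "(int (\<phi> j + 1) - int 1) mod int m = (int i - int j) mod int m"
      using m by (simp add: \<phi>_def)
    from c[unfolded circulant_matrix_def, rule_format, OF p i j this] show ?thesis by simp
  qed
  have s1: "{j\<in>{1..m}. M i j = 1} = {j\<in>{1..m}. M (\<phi> j + 1) 1 = 1}"
    by (rule Collect_cong) (use val in auto)
  have s2: "\<phi> ` {j\<in>{1..m}. M (\<phi> j + 1) 1 = 1} = {r\<in>\<phi> ` {1..m}. M (r+1) 1 = 1}"
    by blast
  have inj2: "inj_on \<phi> {j\<in>{1..m}. M (\<phi> j + 1) 1 = 1}"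
    by (rule inj_on_subset[OF inj]) blast
  have "card {j\<in>{1..m}. M i j = 1} = card (\<phi> ` {j\<in>{1..m}. M (\<phi> j + 1) 1 = 1})"
    unfolding s1 by (rule card_image[OF inj2, symmetric])
  also have "\<dots> = card {r\<in>{0..<m}. M (r+1) 1 = 1}" unfolding s2 img ..
  finally show ?thesis .
qed

theorem theorem4p6:
  fixes n :: nat and T :: "nat set"
  assumes "n \<ge> 2" and "T \<noteq> {}" and "T \<subseteq> {1..n-1}"
  shows "(regular_graph {1..n} (toeplitz_adj n T) \<longrightarrow>
            circulant_matrix n (adj_matrix (toeplitz_adj n T))) \<and>
         (circulant_graph {1..n} (toeplitz_adj n T) \<longrightarrow>
            regular_graph {1..n} (toeplitz_adj n T))"
proof (intro conjI impI)
  assume reg: "regular_graph {1..n} (toeplitz_adj n T)"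
  have sym: "\<forall>i\<in>{1..n-1}. i \<in> T \<longleftrightarrow> n - i \<in> T"
    using symm_T[OF assms(3) reg] by blast
  show "circulant_matrix n (adj_matrix (toeplitz_adj n T))"
    unfolding circulant_matrix_def
  proof (intro ballI impI)
    fix i j i' j' assume i: "i \<in> {1..n}" and j: "j \<in> {1..n}" and i': "i' \<in> {1..n}"
      and j': "j' \<in> {1..n}" and eq: "(int i - int j) mod int n = (int i' - int j') mod int n"
    have "toeplitz_adj n T i j \<longleftrightarrow> toeplitz_adj n T i' j'"
      unfolding adj_mod[OF assms(3) sym i j] adj_mod[OF assms(3) sym i' j'] eq ..
    then show "adj_matrix (toeplitz_adj n T) i j = adj_matrix (toeplitz_adj n T) i' j'"
      unfolding adj_matrix_def by simp
  qed
next
  assume "circulant_graph {1..n} (toeplitz_adj n T)"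
  then obtain m f and M :: "nat \<Rightarrow> nat \<Rightarrow> int" where
    bij: "bij_betw f {1..n} {1..m}" and c: "circulant_matrix m M" and
    E: "\<forall>u\<in>{1..n}. \<forall>v\<in>{1..n}. toeplitz_adj n T u v \<longleftrightarrow> M (f u) (f v) = 1"
    unfolding circulant_graph_def by blast
  show "regular_graph {1..n} (toeplitz_adj n T)"
    unfolding regular_graph_def
  proof (intro exI ballI)
    fix v assume v: "v \<in> {1..n}"
    have "{u\<in>{1..n}. toeplitz_adj n T v u} = {u\<in>{1..n}. M (f v) (f u) = 1}"
      by (rule Collect_cong) (use E v in blast)
    then have "card {u\<in>{1..n}. toeplitz_adj n T v u} = card {u\<in>{1..n}. M (f v) (f u) = 1}"
      by simp
    also have "\<dots> = card (f ` {u\<in>{1..n}. M (f v) (f u) = 1})"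
      by (rule card_image[symmetric], rule inj_on_subset[OF bij_betw_imp_inj_on[OF bij]]) blast
    also have "f ` {u\<in>{1..n}. M (f v) (f u) = 1} = {j\<in>f ` {1..n}. M (f v) j = 1}"
      by blast
    also have "f ` {1..n} = {1..m}" by (rule bij_betw_imp_surj_on[OF bij])
    also have "card {j\<in>{1..m}. M (f v) j = 1} = card {r\<in>{0..<m}. M (r+1) 1 = 1}"
      by (rule circ_card[OF c], use bij_betwE[OF bij] v in blast)
    finally show "card {u\<in>{1..n}. toeplitz_adj n T v u} = card {r\<in>{0..<m}. M (r+1) 1 = 1}" .
  qed
qed

end
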